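(* Let $q$ be a prime power with $q-1=ds$, where $d\ge 3$ and $s$ are positive integers, let $r_0,r_1$ be positive integers and $a_0,a_1\in\mathbb{F}_q^*$. Let $$f(x)=\frac1d\,(a_0x^{r_0}-a_1x^{r_1})\,(1+x^s+\cdots+x^{(d-1)s})+a_1x^{r_1}.$$ Then $f$ is a permutation polynomial of $\mathbb{F}_q$ if and only if $\gcd(r_0r_1,s)=\gcd(r_1,d)=1$ and $a_0^s=a_1^s$. In this case the inverse of $f$ over $\mathbb{F}_q$ is given by $$f^{-1}(x)=\frac1d\left[\left(\frac{x}{a_0}\right)^{\tilde r_0}-\left(\frac{x}{a_1}\right)^{\tilde r_1}\right]\left[1+\left(\frac{x}{a_1}\right)^s+\cdots+\left(\frac{x}{a_1}\right)^{(d-1)s}\right]+\left(\frac{x}{a_1}\right)^{\tilde r_1+us},$$ where, for $i=0,1$, $\tilde r_i$ is a positive integer inverse of $r_i$ modulo $s$ (i.e. $r_i\tilde r_i\equiv1\pmod s$), $r_1'$ is an inverse of $r_1$ modulo $d$, and $u$ is the integer with $0\le u<d$ and $u\equiv r_1'(1-r_1\tilde r_1)/s\pmod d$.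
   Context: A polynomial $f\in\mathbb{F}_q[x]$ is a permutation polynomial of $\mathbb{F}_q$ if it induces a bijection of $\mathbb{F}_q$. A polynomial $g$ is the inverse of $f$ over $\mathbb{F}_q$ if $g(f(c))=c$ for all $c\in\mathbb{F}_q$. Since $d\mid q-1$, $1/d$ makes sense in $\mathbb{F}_q$. *)

theory Defs
  imports "HOL-Computational_Algebra.Polynomial" "HOL-Number_Theory.Cong" "HOL-Library.Cardinality"
begin

definition perm_poly :: "'a::{finite,field} poly \<Rightarrow> bool" where
  "perm_poly f \<longleftrightarrow> bij (poly f)"

definition fpoly :: "nat \<Rightarrow> nat \<Rightarrow> nat \<Rightarrow> nat \<Rightarrow> 'a::field \<Rightarrow> 'a \<Rightarrow> 'a poly" where
  "fpoly d s r0 r1 a0 a1 =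
     smult (inverse (of_nat d))
       ((monom a0 r0 - monom a1 r1) * (\<Sum>i<d. monom 1 (i * s)))
     + monom a1 r1"

definition ginv :: "nat \<Rightarrow> nat \<Rightarrow> nat \<Rightarrow> nat \<Rightarrow> nat \<Rightarrow> 'a::field \<Rightarrow> 'a \<Rightarrow> 'a poly" where
  "ginv d s rt0 rt1 u a0 a1 =
     smult (inverse (of_nat d))
       ((monom (inverse a0 ^ rt0) rt0 - monom (inverse a1 ^ rt1) rt1)
        * (\<Sum>i<d. monom (inverse a1 ^ (i * s)) (i * s)))
     + monom (inverse a1 ^ (rt1 + u * s)) (rt1 + u * s)"

end

theory Submission
  imports Defs
begin


lemma of_nat_card_eq_0: "(of_nat CARD('a::{finite,field}) :: 'a) = 0"
proof -
  have inj: "inj (\<lambda>y::'a. y + 1)" by (auto simp: inj_def)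
  have surj: "(\<lambda>y::'a. y + 1) ` UNIV = UNIV"
    by (metis UNIV_eq_I diff_add_cancel image_eqI iso_tuple_UNIV_I)
  have "(\<Sum>y\<in>(UNIV::'a set). y + 1) = (\<Sum>y\<in>(\<lambda>y. y+1)`UNIV. y)"
    using sum.reindex[OF inj, of id] by simp
  also have "\<dots> = (\<Sum>y\<in>UNIV. y)" by (simp only: surj)
  finally have "(\<Sum>y\<in>(UNIV::'a set). y) + of_nat CARD('a) = (\<Sum>y\<in>UNIV. y)"
    by (simp add: sum.distrib)
  then show ?thesis by simp
qed

lemma fermat_field:
  fixes x :: "'a::{finite,field}" assumes "x \<noteq> 0"
  shows "x ^ (CARD('a) - 1) = 1"
proof -
  let ?A = "UNIV - {0::'a}"
  have inj: "inj_on (\<lambda>y. x*y) ?A" using assms by (auto simp: inj_on_def)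
  have im: "(\<lambda>y. x*y) ` ?A = ?A"
  proof
    show "(\<lambda>y. x*y) ` ?A \<subseteq> ?A" using assms by auto
    show "?A \<subseteq> (\<lambda>y. x*y) ` ?A"
    proof
      fix z assume "z \<in> ?A"
      then have "z = x * (z / x)" "z / x \<in> ?A" using assms by auto
      then show "z \<in> (\<lambda>y. x*y) ` ?A" by blast
    qed
  qed
  have "prod id ?A = prod id ((\<lambda>y. x*y) ` ?A)" by (simp only: im)
  also have "\<dots> = prod (\<lambda>y. x*y) ?A" using prod.reindex[OF inj, of id] by simp
  also have "\<dots> = x ^ card ?A * prod id ?A" by (simp add: prod.distrib)
  finally have "prod id ?A = x ^ card ?A * prod id ?A" .
  moreover have "prod id ?A \<noteq> 0" by auto
  moreover have "card ?A = CARD('a) - 1" by (simp add: card_Diff_singleton)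
  ultimately show ?thesis by simp
qed

lemma pow_mod_eq:
  fixes x :: "'a::comm_monoid_mult" assumes "x ^ k = 1"
  shows "x ^ m = x ^ (m mod k)"
proof -
  have "x ^ m = x ^ (k * (m div k) + m mod k)" by simp
  also have "\<dots> = x ^ (k * (m div k)) * x ^ (m mod k)" by (rule power_add)
  also have "\<dots> = (x ^ k) ^ (m div k) * x ^ (m mod k)" by (simp add: power_mult)
  finally show ?thesis using assms by simp
qed

lemma pow_cong_eq:
  fixes x :: "'a::comm_monoid_mult" assumes "x ^ k = 1" "[m = n] (mod k)"
  shows "x ^ m = x ^ n"
  using pow_mod_eq[OF assms(1), of m] pow_mod_eq[OF assms(1), of n] assms(2)
  by (simp add: cong_def)

lemma card_unity_roots:
  fixes m :: nat assumes "m > 0"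
  shows "card {x::'a::field. x ^ m = 1} \<le> m"
proof -
  let ?P = "monom (1::'a) m - 1"
  have "coeff ?P m = 1" using assms by simp
  then have nz: "?P \<noteq> 0" by (metis coeff_0 zero_neq_one)
  have "degree ?P \<le> m" by (intro degree_diff_le) (auto simp: degree_monom_le)
  moreover have "{x. x ^ m = 1} = {x. poly ?P x = 0}" by (auto simp: poly_monom)
  ultimately show ?thesis using card_poly_roots_bound[OF nz] by simp
qed

lemma exists_root_unity:
  fixes e :: nat assumes "e dvd (CARD('a::{finite,field}) - 1)" "e > 1"
  shows "\<exists>y::'a. y ^ e = 1 \<and> y \<noteq> 1"
proof (rule ccontr)
  assume H: "\<not> ?thesis"
  let ?N = "CARD('a) - 1"
  let ?A = "UNIV - {0::'a}"
  obtain m where m: "?N = e * m" using assms(1) by blast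
  have "CARD('a) \<ge> 2"
  proof -
    have "{0::'a, 1} \<subseteq> UNIV" by simp
    then have "card {0::'a,1} \<le> CARD('a)" by (intro card_mono) auto
    then show ?thesis by simp
  qed
  then have m0: "m > 0" using m by (cases m) auto
  have mN: "m < ?N" using m m0 assms(2) by simp
  have inj: "inj_on (\<lambda>x. x ^ e) ?A"
  proof (rule inj_onI)
    fix x y assume xy: "x \<in> ?A" "y \<in> ?A" "x ^ e = y ^ e"
    then have "(x / y) ^ e = 1" by (simp add: power_divide)
    then have "x / y = 1" using H by blast
    then show "x = y" using xy by simp
  qed
  have "(\<lambda>x. x ^ e) ` ?A \<subseteq> ?A" by auto
  then have im: "(\<lambda>x. x ^ e) ` ?A = ?A" using endo_inj_surj[OF _ _ inj] by simp
  have "?A \<subseteq> {z. z ^ m = 1}"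
  proof
    fix z assume "z \<in> ?A"
    then obtain x where x: "x \<in> ?A" "z = x ^ e" using im by blast
    then have "z ^ m = x ^ (e * m)" by (simp add: power_mult)
    also have "\<dots> = x ^ ?N" using m by simp
    also have "\<dots> = 1" using fermat_field x by auto
    finally show "z \<in> {z. z ^ m = 1}" by simp
  qed
  then have "card ?A \<le> card {z::'a. z ^ m = 1}" by (intro card_mono) auto
  also have "\<dots> \<le> m" using card_unity_roots[OF m0] .
  finally show False using mN by (simp add: card_Diff_singleton)
qed



lemma poly_monom_inv: "poly (monom (inverse a ^ n) n) (y::'a::field) = (y / a) ^ n"
proof -
  have "(y / a) ^ n = y ^ n / a ^ n" by (rule power_divide)
  also have "\<dots> = inverse a ^ n * y ^ n" by (simp add: divide_inverse power_inverse mult.commute)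
  finally show ?thesis by (simp add: poly_monom)
qed

lemma inv_cancel: "(D::'a::field) \<noteq> 0 \<Longrightarrow> inverse D * (X * D) = X"
  by (metis mult.left_commute mult.commute left_inverse mult_1_right)

lemma geo_root_sum:
  fixes z :: "'a::field" assumes "z ^ d = 1" "z \<noteq> 1"
  shows "(\<Sum>i<d. z ^ i) = 0"
  using assms by (simp add: sum_gp_strict)

lemma fpoly_eval:
  fixes c a0 a1 :: "'a::{finite,field}"
  assumes N: "CARD('a) - 1 = d * s" and s: "s > 0" and r: "r0 > 0" "r1 > 0"
    and dn: "(of_nat d :: 'a) \<noteq> 0"
  shows "poly (fpoly d s r0 r1 a0 a1) c =
     (if c = 0 then 0 else if c ^ s = 1 then a0 * c ^ r0 else a1 * c ^ r1)"
proof -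
  have S: "poly (\<Sum>i<d. monom (1::'a) (i * s)) c = (\<Sum>i<d. (c ^ s) ^ i)"
    unfolding poly_sum by (rule sum.cong[OF refl]) (simp add: poly_monom, metis mult.commute power_mult)
  have P: "poly (fpoly d s r0 r1 a0 a1) c =
      inverse (of_nat d) * ((a0 * c ^ r0 - a1 * c ^ r1) * (\<Sum>i<d. (c ^ s) ^ i)) + a1 * c ^ r1"
    unfolding fpoly_def by (simp add: S poly_monom)
  show ?thesis
  proof (cases "c = 0")
    case True then show ?thesis using P r by (simp add: zero_power)
  next
    case False
    have cd: "(c ^ s) ^ d = 1"
      using fermat_field[OF False] N by (simp add: power_mult[symmetric] mult.commute)
    show ?thesis
    proof (cases "c ^ s = 1")
      case True
      then show ?thesis using P False dn by (simp add: inv_cancel)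
    next
      case False2: False
      then show ?thesis using P False geo_root_sum[OF cd False2] by simp
    qed
  qed
qed

lemma ginv_eval:
  fixes y a0 a1 :: "'a::{finite,field}"
  assumes N: "CARD('a) - 1 = d * s" and s: "s > 0" and r: "rt0 > 0" "rt1 > 0"
    and dn: "(of_nat d :: 'a) \<noteq> 0" and a: "a0 \<noteq> 0" "a1 \<noteq> 0"
  shows "poly (ginv d s rt0 rt1 u a0 a1) y =
     (if y = 0 then 0 else if (y / a1) ^ s = 1 then (y / a0) ^ rt0 else (y / a1) ^ (rt1 + u * s))"
proof -
  have S: "poly (\<Sum>i<d. monom (inverse a1 ^ (i * s)) (i * s)) y = (\<Sum>i<d. ((y / a1) ^ s) ^ i)"
    unfolding poly_sum by (rule sum.cong[OF refl]) (simp only: poly_monom_inv, metis mult.commute power_mult)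
  have P: "poly (ginv d s rt0 rt1 u a0 a1) y =
      inverse (of_nat d) * (((y / a0) ^ rt0 - (y / a1) ^ rt1) * (\<Sum>i<d. ((y / a1) ^ s) ^ i))
        + (y / a1) ^ (rt1 + u * s)"
    unfolding ginv_def by (simp only: poly_add poly_smult poly_mult poly_diff S poly_monom_inv)
  show ?thesis
  proof (cases "y = 0")
    case True then show ?thesis using P r by (simp add: zero_power)
  next
    case False
    then have ya: "y / a1 \<noteq> 0" using a by simp
    have cd: "((y / a1) ^ s) ^ d = 1"
      using fermat_field[OF ya] N by (simp add: power_mult[symmetric] mult.commute)
    show ?thesis
    proof (cases "(y / a1) ^ s = 1")
      case True
      have "(y / a1) ^ (rt1 + u * s) = (y / a1) ^ rt1"
        using True by (simp add: power_add power_mult mult.commute)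
      then show ?thesis using P False True dn by (simp add: inv_cancel)
    next
      case False2: False
      then show ?thesis using P False geo_root_sum[OF cd False2] by simp
    qed
  qed
qed



lemma core_inv:
  fixes a0 a1 c :: "'a::{finite,field}"
  assumes N: "CARD('a) - 1 = d * s" and s: "s > 0" and r: "r0 > 0" "r1 > 0"
    and a: "a0 \<noteq> 0" "a1 \<noteq> 0" and dn: "(of_nat d :: 'a) \<noteq> 0"
    and cop: "coprime r1 d" and as: "a0 ^ s = a1 ^ s"
    and rt: "rt0 > 0" "rt1 > 0"
    and c0: "[r0 * rt0 = 1] (mod s)" and c1: "[r1 * rt1 = 1] (mod s)"
    and c2: "[int r1 * r1' = 1] (mod int d)"
    and cu: "[int u = r1' * ((1 - int r1 * int rt1) div int s)] (mod int d)"
  shows "poly (ginv d s rt0 rt1 u a0 a1) (poly (fpoly d s r0 r1 a0 a1) c) = c"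
proof -
  note Fe = fpoly_eval[OF N s r dn]
  note Ge = ginv_eval[OF N s rt dn a, of u]
  show ?thesis
  proof (cases "c = 0")
    case True then show ?thesis using Fe Ge by simp
  next
    case False
    have cN: "c ^ (d * s) = 1" using fermat_field[OF False] N by simp
    show ?thesis
    proof (cases "c ^ s = 1")
      case True
      have Fc: "poly (fpoly d s r0 r1 a0 a1) c = a0 * c ^ r0" using Fe False True by simp
      have "(a0 * c ^ r0 / a1) ^ s = a0 ^ s * (c ^ s) ^ r0 / a1 ^ s"
        by (simp add: power_divide power_mult_distrib flip: power_mult) (simp add: mult.commute)
      also have "\<dots> = 1" using True as a by simp
      finally have h1: "(a0 * c ^ r0 / a1) ^ s = 1" .
      have "(a0 * c ^ r0 / a0) ^ rt0 = c ^ (r0 * rt0)" using a by (simp add: power_mult)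
      also have "\<dots> = c ^ 1" using pow_cong_eq[OF True c0] .
      finally have h2: "(a0 * c ^ r0 / a0) ^ rt0 = c" by simp
      show ?thesis using Fc Ge h1 h2 False a by simp
    next
      case False2: False
      have Fc: "poly (fpoly d s r0 r1 a0 a1) c = a1 * c ^ r1" using Fe False False2 by simp
      have ya: "a1 * c ^ r1 / a1 = c ^ r1" using a by simp
      obtain r'' where r'': "[r1 * r'' = Suc 0] (mod d)" using cong_solve_coprime_nat[OF cop] by blast
      have zd: "(c ^ s) ^ d = 1" using cN by (simp add: power_mult[symmetric] mult.commute)
      have h1: "(c ^ r1) ^ s \<noteq> 1"
      proof
        assume "(c ^ r1) ^ s = 1"
        then have z1: "(c ^ s) ^ r1 = 1" by (simp add: power_mult[symmetric] mult.commute)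
        have "c ^ s = (c ^ s) ^ (r1 * r'')"
          using pow_cong_eq[OF zd r''] by simp
        also have "\<dots> = 1" using z1 by (simp add: power_mult)
        finally show False using False2 by simp
      qed
      define w where "w = (1 - int r1 * int rt1) div int s"
      have "[int (r1 * rt1) = int 1] (mod int s)" using c1 by (simp only: cong_int_iff)
      then have "int s dvd int r1 * int rt1 - 1" by (simp add: cong_iff_dvd_diff)
      then have "int s dvd 1 - int r1 * int rt1" by (simp add: dvd_diff_commute)
      then have E1: "1 - int r1 * int rt1 = w * int s" unfolding w_def by simp
      have "int d dvd int r1 * r1' - 1" using c2 by (simp add: cong_iff_dvd_diff)
      then obtain k1 where E2: "int r1 * r1' - 1 = int d * k1" by (elim dvdE)
      have "int d dvd int u - r1' * w" using cu unfolding w_def[symmetric] by (simp add: cong_iff_dvd_diff)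
      then obtain k2 where E3: "int u - r1' * w = int d * k2" by (elim dvdE)
      have "int (r1 * (rt1 + u * s)) - int 1 = int d * int s * (k1 * w + int r1 * k2)"
        using E1 E2 E3 by simp algebra
      then have "int (d * s) dvd int (r1 * (rt1 + u * s)) - int 1" by simp
      then have "[int (r1 * (rt1 + u * s)) = int 1] (mod int (d * s))"
        by (simp only: cong_iff_dvd_diff)
      then have cg: "[r1 * (rt1 + u * s) = 1] (mod d * s)" by (simp only: cong_int_iff)
      have "(c ^ r1) ^ (rt1 + u * s) = c ^ (r1 * (rt1 + u * s))" by (simp add: power_mult)
      also have "\<dots> = c ^ 1" using pow_cong_eq[OF cN cg] .
      finally have h2: "(c ^ r1) ^ (rt1 + u * s) = c" by simp
      show ?thesis using Fc Ge ya h1 h2 False a by simp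
    qed
  qed
qed



theorem corollary4p3:
  fixes d s r0 r1 :: nat and a0 a1 :: "'a::{finite,field}"
  assumes "CARD('a) - 1 = d * s" and "d \<ge> 3" and "s > 0"
    and "r0 > 0" and "r1 > 0" and "a0 \<noteq> 0" and "a1 \<noteq> 0"
  shows "(perm_poly (fpoly d s r0 r1 a0 a1) \<longleftrightarrow>
            (coprime (r0 * r1) s \<and> coprime r1 d \<and> a0 ^ s = a1 ^ s))
       \<and> (perm_poly (fpoly d s r0 r1 a0 a1) \<longrightarrow>
            (\<forall>rt0 rt1 :: nat. \<forall>r1' :: int. \<forall>u :: nat.
               rt0 > 0 \<longrightarrow> rt1 > 0 \<longrightarrow>
               [r0 * rt0 = 1] (mod s) \<longrightarrow> [r1 * rt1 = 1] (mod s) \<longrightarrow>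
               [int r1 * r1' = 1] (mod int d) \<longrightarrow>
               u < d \<longrightarrow>
               [int u = r1' * ((1 - int r1 * int rt1) div int s)] (mod int d) \<longrightarrow>
               (\<forall>c. poly (ginv d s rt0 rt1 u a0 a1) (poly (fpoly d s r0 r1 a0 a1) c) = c)))"
proof -
  note N = assms(1) and d3 = assms(2) and s = assms(3) and r = assms(4,5) and a = assms(6,7)
  define M where "M = d * s"
  have CM: "CARD('a) = M + 1"
  proof -
    have c: "CARD('a) > 0" by simp
    show ?thesis using c N unfolding M_def by linarith
  qed
  have dn: "(of_nat d :: 'a) \<noteq> 0"
  proof
    assume "(of_nat d :: 'a) = 0"
    then have "(of_nat M :: 'a) = 0" by (simp add: M_def)
    then have "(of_nat CARD('a) :: 'a) = 1" using CM by simp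
    then show False using of_nat_card_eq_0[where 'a='a] by simp
  qed
  have ferm: "\<And>x::'a. x \<noteq> 0 \<Longrightarrow> x ^ M = 1" using fermat_field N M_def by metis
  define F where "F = poly (fpoly d s r0 r1 a0 a1)"
  have Fe: "\<And>c. F c = (if c = 0 then 0 else if c ^ s = 1 then a0 * c ^ r0 else a1 * c ^ r1)"
    unfolding F_def by (rule fpoly_eval[OF N s r dn])
  have nec: "coprime (r0 * r1) s \<and> coprime r1 d \<and> a0 ^ s = a1 ^ s"
    if P: "perm_poly (fpoly d s r0 r1 a0 a1)"
  proof -
    have inj: "inj F" using P unfolding perm_poly_def F_def bij_def by simp
    have F1: "F 1 = a0" using Fe by simp
    have cop0: "coprime r0 s"
    proof (rule ccontr)
      assume nc: "\<not> coprime r0 s"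
      define e where "e = gcd r0 s"
      have e1: "e > 1" using nc s unfolding e_def coprime_iff_gcd_eq_1
        by (metis gcd_pos_nat less_one nat_neq_iff)
      have "e dvd M" unfolding e_def M_def by simp
      then obtain y :: 'a where y: "y ^ e = 1" "y \<noteq> 1"
        using exists_root_unity[where 'a='a, of e] e1 CM by auto
      have ys: "y ^ s = 1" using y(1) unfolding e_def by (metis dvd_def gcd_dvd2 power_mult power_one)
      have yr: "y ^ r0 = 1" using y(1) unfolding e_def by (metis dvd_def gcd_dvd1 power_mult power_one)
      have "y \<noteq> 0" using ys s by (metis power_0_left zero_neq_one not_gr0)
      then have "F y = F 1" using Fe ys yr F1 by simp
      then show False using inj y(2) by (meson injD)
    qed
    have cop1: "coprime r1 M"
    proof (rule ccontr)
      assume nc: "\<not> coprime r1 M"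
      define e where "e = gcd r1 M"
      have M0: "M > 0" using d3 s M_def by simp
      have e1: "e > 1" using nc M0 unfolding e_def coprime_iff_gcd_eq_1
        by (metis gcd_pos_nat less_one nat_neq_iff)
      have "e dvd M" unfolding e_def by simp
      then obtain y :: 'a where y: "y ^ e = 1" "y \<noteq> 1"
        using exists_root_unity[where 'a='a, of e] e1 CM by auto
      have yr: "y ^ r1 = 1" using y(1) unfolding e_def by (metis dvd_def gcd_dvd1 power_mult power_one)
      have y0: "y \<noteq> 0"
      proof
        assume "y = 0"
        then have "y ^ e = 0" using e1 by simp
        then show False using y(1) by simp
      qed
      define H where "H = {x::'a. x ^ s = 1}"
      define H' where "H' = (\<lambda>x. x * inverse y) ` H"
      have cH: "card H \<le> s" unfolding H_def using card_unity_roots[OF s] .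
      have cH': "card H' \<le> s" unfolding H'_def using cH card_image_le[of H] by (meson finite order_trans)
      have "card (insert 0 (H \<union> H')) \<le> card (H \<union> H') + 1" by (simp add: card_insert_if)
      also have "\<dots> \<le> card H + card H' + 1" using card_Un_le[of H H'] by simp
      also have "\<dots> < CARD('a)" using cH cH' CM M_def d3 s
      proof -
        have "3 * s \<le> d * s" using d3 by simp
        then show ?thesis using cH cH' CM M_def s by linarith
      qed
      finally have "insert 0 (H \<union> H') \<noteq> UNIV" by auto
      then obtain x where x: "x \<notin> insert 0 (H \<union> H')" by auto
      have x0: "x \<noteq> 0" and xs: "x ^ s \<noteq> 1" using x unfolding H_def by auto
      have xys: "(x * y) ^ s \<noteq> 1"
      proof
        assume "(x * y) ^ s = 1"
        then have "x * y \<in> H" unfolding H_def by simp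
        then have "x * y * inverse y \<in> H'" unfolding H'_def by blast
        moreover have "x * y * inverse y = x" using y0 by simp
        ultimately show False using x by simp
      qed
      have "F (x * y) = a1 * x ^ r1" using Fe x0 y0 xys yr by (simp add: power_mult_distrib)
      also have "\<dots> = F x" using Fe x0 xs by simp
      finally have "x * y = x" using inj by (meson injD)
      then show False using x0 y(2) by simp
    qed
    then have cop1s: "coprime r1 s" and cop1d: "coprime r1 d" unfolding M_def by auto
    have as: "a0 ^ s = a1 ^ s"
    proof (rule ccontr)
      assume nas: "a0 ^ s \<noteq> a1 ^ s"
      obtain r'' where r'': "[r1 * r'' = Suc 0] (mod M)" using cong_solve_coprime_nat[OF cop1] by blast
      define b where "b = a0 / a1"
      have b0: "b \<noteq> 0" using a b_def by simp
      define x where "x = b ^ r''"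
      have x0: "x \<noteq> 0" using b0 x_def by simp
      have xr: "x ^ r1 = b" unfolding x_def
        using pow_cong_eq[OF ferm[OF b0] r''] by (simp add: power_mult[symmetric] mult.commute)
      have xs: "x ^ s \<noteq> 1"
      proof
        assume "x ^ s = 1"
        then have "b ^ s = 1" using xr by (metis power_mult mult.commute power_one)
        then show False using nas a unfolding b_def by (simp add: power_divide)
      qed
      have "F x = a1 * b" using Fe x0 xs xr by simp
      also have "\<dots> = F 1" using F1 a b_def by simp
      finally have "x = 1" using inj by (meson injD)
      then show False using xs by simp
    qed
    show ?thesis using cop0 cop1s cop1d as by simp
  qed
  have core: "\<And>rt0 rt1 r1' u c. coprime r1 d \<Longrightarrow> a0 ^ s = a1 ^ s \<Longrightarrow> rt0 > 0 \<Longrightarrow> rt1 > 0 \<Longrightarrow>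
     [r0 * rt0 = 1] (mod s) \<Longrightarrow> [r1 * rt1 = 1] (mod s) \<Longrightarrow> [int r1 * r1' = 1] (mod int d) \<Longrightarrow>
     [int u = r1' * ((1 - int r1 * int rt1) div int s)] (mod int d) \<Longrightarrow>
     poly (ginv d s rt0 rt1 u a0 a1) (poly (fpoly d s r0 r1 a0 a1) c) = c"
    by (rule core_inv[OF N s r a dn])
  have suf: "perm_poly (fpoly d s r0 r1 a0 a1)"
    if C: "coprime (r0 * r1) s \<and> coprime r1 d \<and> a0 ^ s = a1 ^ s"
  proof -
    have c0: "coprime r0 s" and c1: "coprime r1 s" using C by auto
    obtain t0 where t0: "[r0 * t0 = Suc 0] (mod s)" using cong_solve_coprime_nat[OF c0] by blast
    obtain t1 where t1: "[r1 * t1 = Suc 0] (mod s)" using cong_solve_coprime_nat[OF c1] by blast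
    have rt0: "[r0 * (t0 + s) = 1] (mod s)" using t0 by (simp add: cong_def algebra_simps)
    have rt1: "[r1 * (t1 + s) = 1] (mod s)" using t1 by (simp add: cong_def algebra_simps)
    have "coprime (int r1) (int d)" using C by simp
    then obtain r1' where r1': "[int r1 * r1' = 1] (mod int d)" using cong_solve_coprime_int by blast
    define w where "w = (1 - int r1 * int (t1 + s)) div int s"
    define u where "u = nat ((r1' * w) mod int d)"
    have d0: "int d > 0" using d3 by simp
    have "int u = (r1' * w) mod int d" unfolding u_def using d0 by simp
    then have cu: "[int u = r1' * ((1 - int r1 * int (t1 + s)) div int s)] (mod int d)"
      unfolding w_def[symmetric] by (simp add: cong_def)
    have "\<forall>c. poly (ginv d s (t0 + s) (t1 + s) u a0 a1) (F c) = c"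
    proof
      fix c
      have cd: "coprime r1 d" and as: "a0 ^ s = a1 ^ s" using C by auto
      have p: "t0 + s > 0" "t1 + s > 0" using s by auto
      show "poly (ginv d s (t0 + s) (t1 + s) u a0 a1) (F c) = c"
        unfolding F_def by (rule core[OF cd as p rt0 rt1 r1' cu])
    qed
    then have "inj F" by (metis injI)
    then have "bij F" using finite_UNIV_inj_surj[of F] by (simp add: bij_def)
    then show ?thesis unfolding perm_poly_def F_def .
  qed
  show ?thesis
  proof (intro conjI impI allI)
    show "perm_poly (fpoly d s r0 r1 a0 a1) \<longleftrightarrow>
            (coprime (r0 * r1) s \<and> coprime r1 d \<and> a0 ^ s = a1 ^ s)" using nec suf by blast
  next
    fix rt0 rt1 :: nat and r1' :: int and u :: nat and c :: 'a
    assume P: "perm_poly (fpoly d s r0 r1 a0 a1)" and h: "rt0 > 0" "rt1 > 0"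
      "[r0 * rt0 = 1] (mod s)" "[r1 * rt1 = 1] (mod s)" "[int r1 * r1' = 1] (mod int d)"
      "u < d" "[int u = r1' * ((1 - int r1 * int rt1) div int s)] (mod int d)"
    show "poly (ginv d s rt0 rt1 u a0 a1) (poly (fpoly d s r0 r1 a0 a1) c) = c"
      using core[OF _ _ h(1-5) h(7)] nec[OF P] by blast
  qed
qed


end
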